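(* Let $F$, $G$ and $\Pi$ be as in the context. If $S\subset\Sigma_A\times I$ is an attracting (resp. repelling) strip with respect to $G$ and $B$ is its maximal attractor (resp. maximal repeller), then $\Pi(B)$ is the maximal attractor (resp. maximal repeller) of the bi-strip $\Pi(S)$, which is attracting (resp. repelling) with respect to $F$.
   Context: $I=[0,1]$, $R(x)=1-x$. $F(\xi,p)=(\sigma(\xi),f_{\xi_0}(p))$ on $\Sigma_N\times I$, $\Sigma_N=\{1,\ldots,N\}^{\mathbb Z}$, with $f_i$ $C^1$-diffeomorphisms onto their images. $\mathcal I_P$ / $\mathcal I_R$: indices of orientation preserving / reversing $f_i$. $A=(a_{ij})_{i,j=1}^{2N}$ with $a_{ij}=1$ if ($i\in\mathcal I_P$, $j\le N$), or ($i\in\mathcal I_R$, $j>N$), or ($i-N\in\mathcal I_P$, $j>N$), or ($i-N\in\mathcal I_R$, $j\le N$), else $0$; $\Sigma_A$ the $A$-admissible sequences in $\{1,\ldots,2N\}^{\mathbb Z}$ with shift $\sigma_A$; $\pi(\omega)_n=\overline{\omega_n}$ ($\overline i=i$ for $i\le N$, $\overline i=i-N$ otherwise). $G(\omega,x)=(\sigma_A(\omega),g_{\omega_0}(x))$ with $g_i=f_i$, $g_{i+N}=R\circ f_i\circ R$ ($i\in\mathcal I_P$), $g_i=R\circ f_i$, $g_{i+N}=f_i\circ R$ ($i\in\mathcal I_R$). $C=\{\omega\colon\omega_0\le N\}$; $\Pi(\omega,x)=(\pi(\omega),x)$ if $\omega\in C$, $(\pi(\omega),R(x))$ otherwise. Strips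 $S_{\varphi,\psi}=\{(\omega,x)\colon\varphi(\omega)\le x\le\psi(\omega)\}$ for $\varphi<\psi$ pointwise; bi-strip = union of two strips. For a step skew-product $H$, a (bi-)strip $S$ is attracting if $H(S)\subset\operatorname{int}S$, repelling if $H^{-1}$ is defined on $S$ and $H^{-1}(S)\subset\operatorname{int}S$. The maximal attractor of an attracting $S$ is $\bigcap_{n\ge0}H^n(S)$; the maximal repeller of a repelling $S$ is $\bigcap_{n\ge0}H^{-n}(S)$ (maximal attractor for $H^{-1}$). *)

theory Defs
  imports "HOL-Analysis.Analysis"
begin

type_synonym seq = "int \<Rightarrow> nat"

definition II :: "real set" where "II = {0..1}"

definition RR :: "real \<Rightarrow> real" where "RR x = 1 - x"

definition C1_diffeo_onto_image :: "(real \<Rightarrow> real) \<Rightarrow> bool" where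
  "C1_diffeo_onto_image h \<longleftrightarrow> h ` II \<subseteq> II \<and> inj_on h II \<and>
     (\<exists>h'. (\<forall>x\<in>II. (h has_real_derivative h' x) (at x within II)) \<and>
           continuous_on II h' \<and> (\<forall>x\<in>II. h' x \<noteq> 0))"

definition IP :: "nat \<Rightarrow> (nat \<Rightarrow> real \<Rightarrow> real) \<Rightarrow> nat set" where
  "IP N f = {i\<in>{1..N}. \<forall>x\<in>II. \<forall>y\<in>II. x < y \<longrightarrow> f i x < f i y}"

definition IR :: "nat \<Rightarrow> (nat \<Rightarrow> real \<Rightarrow> real) \<Rightarrow> nat set" where
  "IR N f = {i\<in>{1..N}. \<forall>x\<in>II. \<forall>y\<in>II. x < y \<longrightarrow> f i y < f i x}"

definition SigmaN :: "nat \<Rightarrow> seq set" where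
  "SigmaN N = {\<xi>. \<forall>n. \<xi> n \<in> {1..N}}"

definition shift :: "seq \<Rightarrow> seq" where "shift \<xi> = (\<lambda>n. \<xi> (n + 1))"

definition amat :: "nat \<Rightarrow> (nat \<Rightarrow> real \<Rightarrow> real) \<Rightarrow> nat \<Rightarrow> nat \<Rightarrow> bool" where
  "amat N f i j \<longleftrightarrow> i \<in> {1..2*N} \<and> j \<in> {1..2*N} \<and>
     ((i \<in> IP N f \<and> j \<le> N) \<or> (i \<in> IR N f \<and> j > N) \<or>
      (i > N \<and> i - N \<in> IP N f \<and> j > N) \<or> (i > N \<and> i - N \<in> IR N f \<and> j \<le> N))"

definition SigmaA :: "nat \<Rightarrow> (nat \<Rightarrow> real \<Rightarrow> real) \<Rightarrow> seq set" where
  "SigmaA N f = {\<omega>. \<forall>n. \<omega> n \<in> {1..2*N} \<and> amat N f (\<omega> n) (\<omega> (n + 1))}"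

definition bar :: "nat \<Rightarrow> nat \<Rightarrow> nat" where
  "bar N i = (if i \<le> N then i else i - N)"

definition proj :: "nat \<Rightarrow> seq \<Rightarrow> seq" where
  "proj N \<omega> = (\<lambda>n. bar N (\<omega> n))"

definition FF :: "(nat \<Rightarrow> real \<Rightarrow> real) \<Rightarrow> seq \<times> real \<Rightarrow> seq \<times> real" where
  "FF f = (\<lambda>(\<xi>, p). (shift \<xi>, f (\<xi> 0) p))"

definition gmap :: "nat \<Rightarrow> (nat \<Rightarrow> real \<Rightarrow> real) \<Rightarrow> nat \<Rightarrow> real \<Rightarrow> real" where
  "gmap N f k = (if k \<le> N then
       (if k \<in> IP N f then f k else RR \<circ> f k)
     else
       (if k - N \<in> IP N f then RR \<circ> f (k - N) \<circ> RR else f (k - N) \<circ> RR))"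

definition GG :: "nat \<Rightarrow> (nat \<Rightarrow> real \<Rightarrow> real) \<Rightarrow> seq \<times> real \<Rightarrow> seq \<times> real" where
  "GG N f = (\<lambda>(\<omega>, x). (shift \<omega>, gmap N f (\<omega> 0) x))"

definition Pi_map :: "nat \<Rightarrow> seq \<times> real \<Rightarrow> seq \<times> real" where
  "Pi_map N = (\<lambda>(\<omega>, x). if \<omega> 0 \<le> N then (proj N \<omega>, x) else (proj N \<omega>, RR x))"

definition strip :: "seq set \<Rightarrow> (seq \<Rightarrow> real) \<Rightarrow> (seq \<Rightarrow> real) \<Rightarrow> (seq \<times> real) set" where
  "strip D \<phi> \<psi> = {(\<omega>, x). \<omega> \<in> D \<and> \<phi> \<omega> \<le> x \<and> x \<le> \<psi> \<omega>}"

definition is_strip :: "seq set \<Rightarrow> (seq \<times> real) set \<Rightarrow> bool" where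
  "is_strip D S \<longleftrightarrow> (\<exists>\<phi> \<psi>. (\<forall>\<omega>\<in>D. 0 \<le> \<phi> \<omega> \<and> \<phi> \<omega> < \<psi> \<omega> \<and> \<psi> \<omega> \<le> 1)
                          \<and> S = strip D \<phi> \<psi>)"

definition is_bistrip :: "seq set \<Rightarrow> (seq \<times> real) set \<Rightarrow> bool" where
  "is_bistrip D S \<longleftrightarrow> (\<exists>S1 S2. is_strip D S1 \<and> is_strip D S2 \<and> S = S1 \<union> S2)"

definition rel_int :: "(seq \<times> real) set \<Rightarrow> (seq \<times> real) set \<Rightarrow> (seq \<times> real) set" where
  "rel_int X S = (top_of_set X) interior_of S"

definition attracting :: "(seq \<times> real \<Rightarrow> seq \<times> real) \<Rightarrow> (seq \<times> real) set \<Rightarrow> (seq \<times> real) set \<Rightarrow> bool" where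
  "attracting H X S \<longleftrightarrow> H ` S \<subseteq> rel_int X S"

definition preim :: "(seq \<times> real \<Rightarrow> seq \<times> real) \<Rightarrow> (seq \<times> real) set \<Rightarrow> (seq \<times> real) set \<Rightarrow> (seq \<times> real) set" where
  "preim H X A = {p \<in> X. H p \<in> A}"

definition repelling :: "(seq \<times> real \<Rightarrow> seq \<times> real) \<Rightarrow> (seq \<times> real) set \<Rightarrow> (seq \<times> real) set \<Rightarrow> bool" where
  "repelling H X S \<longleftrightarrow> S \<subseteq> H ` X \<and> preim H X S \<subseteq> rel_int X S"

definition max_attractor :: "(seq \<times> real \<Rightarrow> seq \<times> real) \<Rightarrow> (seq \<times> real) set \<Rightarrow> (seq \<times> real) set" where
  "max_attractor H S = (\<Inter>n. ((\<lambda>A. H ` A) ^^ n) S)"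

definition max_repeller :: "(seq \<times> real \<Rightarrow> seq \<times> real) \<Rightarrow> (seq \<times> real) set \<Rightarrow> (seq \<times> real) set \<Rightarrow> (seq \<times> real) set" where
  "max_repeller H X S = (\<Inter>n. ((\<lambda>A. preim H X A) ^^ n) S)"

end

theory Submission
  imports Defs
begin



lemma sign_const:
  fixes g :: "real \<Rightarrow> real"
  assumes c: "continuous_on II g" and nz: "\<forall>x\<in>II. g x \<noteq> 0"
  shows "(\<forall>x\<in>II. g x > 0) \<or> (\<forall>x\<in>II. g x < 0)"
proof (rule ccontr)
  assume "\<not> ?thesis"
  then obtain a b where a: "a \<in> II" "g a > 0" and b: "b \<in> II" "g b < 0"
    using nz by (metis linorder_neqE_linordered_idom)
  show False
  proof (cases "a \<le> b")
    case True
    have "continuous_on {a..b} (\<lambda>x. - g x)"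
      using continuous_on_minus[OF continuous_on_subset[OF c, of "{a..b}"]] a b by (auto simp: II_def)
    then obtain x where "a \<le> x" "x \<le> b" "- g x = 0"
      using IVT'[of "\<lambda>x. - g x" a 0 b] a b True by auto
    then show False using nz a b by (auto simp: II_def)
  next
    case False
    have "continuous_on {b..a} g"
      using continuous_on_subset[OF c, of "{b..a}"] a b by (auto simp: II_def)
    then obtain x where "b \<le> x" "x \<le> a" "g x = 0"
      using IVT'[of g b 0 a] a b False by auto
    then show False using nz a b by (auto simp: II_def)
  qed
qed

lemma mono_of_deriv:
  fixes h h' :: "real \<Rightarrow> real"
  assumes d: "\<forall>x\<in>II. (h has_real_derivative h' x) (at x within II)"
    and pos: "\<forall>x\<in>II. h' x > 0"
  shows "\<forall>x\<in>II. \<forall>y\<in>II. x < y \<longrightarrow> h x < h y"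
proof (intro ballI impI)
  fix x y assume xy: "x \<in> II" "y \<in> II" "x < y"
  have ch: "continuous_on II h"
    using d by (meson DERIV_continuous continuous_at_imp_continuous_on continuous_on_eq_continuous_within)
  show "h x < h y"
  proof (rule DERIV_pos_imp_increasing_open[OF xy(3)])
    fix z assume z: "x < z" "z < y"
    have zi: "z \<in> interior II" using xy z by (auto simp: II_def)
    then have "z \<in> II" using interior_subset by blast
    then have "(h has_real_derivative h' z) (at z)"
      using d zi at_within_interior by metis
    then show "\<exists>y. (h has_real_derivative y) (at z) \<and> y > 0" using pos \<open>z \<in> II\<close> by blast
  next
    show "continuous_on {x..y} h" using continuous_on_subset[OF ch, of "{x..y}"] xy by (auto simp: II_def)
  qed
qed

lemma IP_or_IR:
  assumes "\<forall>i\<in>{1..N}. C1_diffeo_onto_image (f i)" "i \<in> {1..N}"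
  shows "i \<in> IP N f \<or> i \<in> IR N f"
proof -
  obtain h' where d: "\<forall>x\<in>II. (f i has_real_derivative h' x) (at x within II)"
    and c: "continuous_on II h'" and nz: "\<forall>x\<in>II. h' x \<noteq> 0"
    using assms unfolding C1_diffeo_onto_image_def by blast
  from sign_const[OF c nz] show ?thesis
  proof
    assume "\<forall>x\<in>II. h' x > 0"
    then have "\<forall>x\<in>II. \<forall>y\<in>II. x < y \<longrightarrow> f i x < f i y" using mono_of_deriv d by blast
    then show ?thesis using assms(2) by (auto simp: IP_def)
  next
    assume "\<forall>x\<in>II. h' x < 0"
    then have p: "\<forall>x\<in>II. - h' x > 0" by auto
    have "\<forall>x\<in>II. ((\<lambda>x. - f i x) has_real_derivative - h' x) (at x within II)"
      using d by (auto intro: derivative_intros)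
    then have "\<forall>x\<in>II. \<forall>y\<in>II. x < y \<longrightarrow> - f i x < - f i y" using mono_of_deriv[OF _ p] by blast
    then show ?thesis using assms(2) by (auto simp: IR_def)
  qed
qed

lemma IP_IR_disj: "i \<in> IP N f \<Longrightarrow> i \<in> IR N f \<Longrightarrow> False"
proof -
  assume a: "i \<in> IP N f" "i \<in> IR N f"
  have "(0::real) \<in> II" "(1::real) \<in> II" by (auto simp: II_def)
  then have "f i 0 < f i 1" "f i 1 < f i 0" using a unfolding IP_def IR_def by auto
  then show False by simp
qed




fun pf :: "nat \<Rightarrow> (nat \<Rightarrow> real \<Rightarrow> real) \<Rightarrow> seq \<Rightarrow> nat \<Rightarrow> bool" where
  "pf N f \<xi> 0 = False"
| "pf N f \<xi> (Suc m) = (pf N f \<xi> m \<noteq> (\<xi> (int m) \<in> IR N f))"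

fun pb :: "nat \<Rightarrow> (nat \<Rightarrow> real \<Rightarrow> real) \<Rightarrow> seq \<Rightarrow> nat \<Rightarrow> bool" where
  "pb N f \<xi> 0 = False"
| "pb N f \<xi> (Suc m) = (pb N f \<xi> m \<noteq> (\<xi> (- int m - 1) \<in> IR N f))"

definition PP :: "nat \<Rightarrow> (nat \<Rightarrow> real \<Rightarrow> real) \<Rightarrow> seq \<Rightarrow> int \<Rightarrow> bool" where
  "PP N f \<xi> n = (if n \<ge> 0 then pf N f \<xi> (nat n) else pb N f \<xi> (nat (- n)))"

definition lift :: "nat \<Rightarrow> (nat \<Rightarrow> real \<Rightarrow> real) \<Rightarrow> bool \<Rightarrow> seq \<Rightarrow> seq" where
  "lift N f c \<xi> = (\<lambda>n. if c = PP N f \<xi> n then \<xi> n else \<xi> n + N)"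

lemma PP0: "PP N f \<xi> 0 = False" by (simp add: PP_def)

lemma PP_step: "PP N f \<xi> (n + 1) = (PP N f \<xi> n \<noteq> (\<xi> n \<in> IR N f))"
proof -
  consider "n \<ge> 0" | "n = -1" | "n \<le> -2" by linarith
  then show ?thesis
  proof cases
    case 1
    then have "nat (n + 1) = Suc (nat n)" by simp
    then show ?thesis using 1 by (simp add: PP_def)
  next
    case 2
    then show ?thesis by (simp add: PP_def numeral_2_eq_2)
  next
    case 3
    then have e: "nat (- n) = Suc (nat (- (n + 1)))" by simp
    have e2: "- int (nat (- (n + 1))) - 1 = n" using 3 by simp
    show ?thesis using 3 by (simp add: PP_def e e2) blast
  qed
qed

lemma pf_local: "(\<And>k. k < m \<Longrightarrow> \<eta> (int k) = \<xi> (int k)) \<Longrightarrow> pf N f \<eta> m = pf N f \<xi> m"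
  by (induction m) auto

lemma pb_local: "(\<And>k. k < m \<Longrightarrow> \<eta> (- int k - 1) = \<xi> (- int k - 1)) \<Longrightarrow> pb N f \<eta> m = pb N f \<xi> m"
  by (induction m) auto

lemma PP_local:
  assumes "\<And>k. min 0 n \<le> k \<Longrightarrow> k \<le> max 0 n \<Longrightarrow> \<eta> k = \<xi> k"
  shows "PP N f \<eta> n = PP N f \<xi> n"
proof (cases "n \<ge> 0")
  case True
  have "pf N f \<eta> (nat n) = pf N f \<xi> (nat n)"
    by (rule pf_local) (use assms True in auto)
  then show ?thesis using True by (simp add: PP_def)
next
  case False
  have "pb N f \<eta> (nat (-n)) = pb N f \<xi> (nat (-n))"
    by (rule pb_local) (use assms False in auto)
  then show ?thesis using False by (simp add: PP_def)
qed

lemma lift_state: "\<xi> n \<in> {1..N} \<Longrightarrow> (lift N f c \<xi> n \<le> N \<longleftrightarrow> c = PP N f \<xi> n)"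
  by (auto simp: lift_def)

lemma proj_lift: "\<xi> \<in> SigmaN N \<Longrightarrow> proj N (lift N f c \<xi>) = \<xi>"
proof -
  assume "\<xi> \<in> SigmaN N"
  then have x: "\<xi> n \<in> {1..N}" for n by (auto simp: SigmaN_def)
  show ?thesis unfolding fun_eq_iff proj_def
  proof
    fix n show "bar N (lift N f c \<xi> n) = \<xi> n" using x[of n] by (auto simp: lift_def bar_def)
  qed
qed

lemma IP_sub: "i \<in> IP N f \<Longrightarrow> i \<in> {1..N}" by (auto simp: IP_def)
lemma IR_sub: "i \<in> IR N f \<Longrightarrow> i \<in> {1..N}" by (auto simp: IR_def)

lemma lift_SigmaA:
  assumes xi: "\<xi> \<in> SigmaN N" and pr: "\<forall>i\<in>{1..N}. i \<in> IP N f \<or> i \<in> IR N f"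
  shows "lift N f c \<xi> \<in> SigmaA N f"
  unfolding SigmaA_def
proof (intro CollectI allI conjI)
  fix n
  have x: "\<xi> m \<in> {1..N}" for m using xi by (auto simp: SigmaN_def)
  show "lift N f c \<xi> n \<in> {1..2 * N}" using x[of n] by (auto simp: lift_def)
  have st: "PP N f \<xi> (n + 1) = (PP N f \<xi> n \<noteq> (\<xi> n \<in> IR N f))" by (rule PP_step)
  have "\<xi> n \<in> IP N f \<or> \<xi> n \<in> IR N f" using pr x[of n] by blast
  moreover have "\<not> (\<xi> n \<in> IP N f \<and> \<xi> n \<in> IR N f)" using IP_IR_disj by blast
  ultimately show "amat N f (lift N f c \<xi> n) (lift N f c \<xi> (n + 1))"
    using x[of n] x[of "n+1"] st unfolding amat_def lift_def by auto
qed

lemma amat_side: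
  assumes "amat N f i j"
  shows "j \<le> N \<longleftrightarrow> (i \<le> N \<and> i \<in> IP N f) \<or> (N < i \<and> i - N \<in> IR N f)"
  using assms IP_IR_disj[of i N f] IP_IR_disj[of "i - N" N f] IP_sub[of i N f] IR_sub[of i N f]
  unfolding amat_def by auto

lemma uniq_seq:
  assumes w: "\<omega> \<in> SigmaA N f" and w': "\<omega>' \<in> SigmaA N f"
    and p: "proj N \<omega> = proj N \<omega>'" and s0: "\<omega> 0 \<le> N \<longleftrightarrow> \<omega>' 0 \<le> N"
  shows "\<omega> = \<omega>'"
proof -
  define s where "s n \<longleftrightarrow> (\<omega> n \<le> N \<longleftrightarrow> \<omega>' n \<le> N)" for n
  have am: "amat N f (\<omega> n) (\<omega> (n+1))" "amat N f (\<omega>' n) (\<omega>' (n+1))" for n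
    using w w' by (auto simp: SigmaA_def)
  have rng: "\<omega> n \<in> {1..2*N}" "\<omega>' n \<in> {1..2*N}" for n
    using w w' by (auto simp: SigmaA_def)
  have b: "bar N (\<omega> n) = bar N (\<omega>' n)" for n using p by (auto simp: proj_def fun_eq_iff)
  have eq: "s n \<Longrightarrow> \<omega> n = \<omega>' n" for n
    using b[of n] rng[of n] unfolding s_def bar_def by (auto split: if_splits)
  have fw: "s n \<Longrightarrow> s (n + 1)" for n
    using eq[of n] amat_side[OF am(1)[of n]] amat_side[OF am(2)[of n]] unfolding s_def by simp
  have bw: "s (n + 1) \<Longrightarrow> s n" for n
  proof (rule ccontr)
    assume h: "s (n + 1)" "\<not> s n"
    have A: "\<omega> (n+1) \<le> N \<longleftrightarrow> \<omega>' (n+1) \<le> N" using h unfolding s_def by simp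
    have i1: "amat N f (\<omega> n) (\<omega> (n+1))" by (rule am)
    have nz: "\<omega> n \<le> N \<Longrightarrow> \<omega> n \<in> IP N f \<or> \<omega> n \<in> IR N f"
      "\<omega> n > N \<Longrightarrow> \<omega> n - N \<in> IP N f \<or> \<omega> n - N \<in> IR N f"
      "\<omega>' n \<le> N \<Longrightarrow> \<omega>' n \<in> IP N f \<or> \<omega>' n \<in> IR N f"
      "\<omega>' n > N \<Longrightarrow> \<omega>' n - N \<in> IP N f \<or> \<omega>' n - N \<in> IR N f"
      using am[of n] unfolding amat_def by (auto dest: IP_sub IR_sub)
    have dj: "\<And>k. k \<in> IP N f \<Longrightarrow> k \<in> IR N f \<Longrightarrow> False" using IP_IR_disj by blast
    show False
    proof (cases "\<omega> n \<le> N")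
      case True
      then have "\<omega>' n > N" using h unfolding s_def by simp
      then have "\<omega>' n - N = \<omega> n" using b[of n] True unfolding bar_def by auto
      then show ?thesis using A amat_side[OF am(1)[of n]] amat_side[OF am(2)[of n]] True \<open>\<omega>' n > N\<close> nz dj
        by auto
    next
      case False
      then have "\<omega>' n \<le> N" using h unfolding s_def by simp
      then have "\<omega> n - N = \<omega>' n" using b[of n] False unfolding bar_def by auto
      then show ?thesis using A amat_side[OF am(1)[of n]] amat_side[OF am(2)[of n]] False \<open>\<omega>' n \<le> N\<close> nz dj
        by auto
    qed
  qed
  have "s (int m) \<and> s (- int m)" for m
  proof (induction m)
    case 0 then show ?case using s0 unfolding s_def by simp
  next
    case (Suc m)
    have "s (int m + 1)" using fw Suc by blast
    moreover have "s (- int m - 1)" using bw[of "- int m - 1"] Suc by simp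
    ultimately show ?case by (metis add.commute of_nat_Suc minus_diff_eq diff_minus_eq_add uminus_add_conv_diff)
  qed
  then have "s n" for n
    by (cases "n \<ge> 0") (metis nonneg_int_cases, metis minus_minus nonneg_int_cases neg_0_le_iff_le linear)
  then show ?thesis using eq by blast
qed

lemma lift_cont: "continuous_on UNIV (lift N f c)"
proof (rule continuous_on_coordinatewise_then_product)
  fix n
  show "continuous_on UNIV (\<lambda>\<xi>. lift N f c \<xi> n)"
    unfolding continuous_on_topological
  proof (intro ballI allI impI)
    fix \<xi> :: seq and B :: "nat set"
    assume "open B" "lift N f c \<xi> n \<in> B"
    define K where "K = {min 0 n .. max 0 n}"
    define A where "A = (\<Inter>k\<in>K. (\<lambda>x::seq. x k) -` {\<xi> k})"
    have "open A" unfolding A_def K_def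
      by (intro open_INT finite_atLeastAtMost_int ballI open_vimage open_discrete continuous_on_product_coordinates)
    moreover have "\<xi> \<in> A" unfolding A_def by auto
    moreover have "lift N f c \<eta> n \<in> B" if "\<eta> \<in> A" for \<eta>
    proof -
      have "\<eta> k = \<xi> k" if "min 0 n \<le> k" "k \<le> max 0 n" for k
        using \<open>\<eta> \<in> A\<close> that unfolding A_def K_def by auto
      then have "PP N f \<eta> n = PP N f \<xi> n" by (rule PP_local)
      moreover have "\<eta> n = \<xi> n" using \<open>\<eta> \<in> A\<close> unfolding A_def K_def by auto
      ultimately have "lift N f c \<eta> n = lift N f c \<xi> n" by (simp add: lift_def)
      then show ?thesis using \<open>lift N f c \<xi> n \<in> B\<close> by simp
    qed
    ultimately show "\<exists>A. open A \<and> \<xi> \<in> A \<and> (\<forall>y\<in>UNIV. y \<in> A \<longrightarrow> lift N f c y n \<in> B)" by blast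
  qed
qed




definition LL :: "nat \<Rightarrow> (nat \<Rightarrow> real \<Rightarrow> real) \<Rightarrow> bool \<Rightarrow> seq \<times> real \<Rightarrow> seq \<times> real" where
  "LL N f c = (\<lambda>(\<xi>, y). (lift N f c \<xi>, if c then 1 - y else y))"

lemma LL_cont: "continuous_on UNIV (LL N f c)"
proof -
  have e: "LL N f c = (\<lambda>p. (lift N f c (fst p), if c then 1 - snd p else snd p))"
    by (auto simp: LL_def fun_eq_iff)
  have "continuous_on UNIV (\<lambda>p::seq\<times>real. lift N f c (fst p))"
    by (rule continuous_on_compose2[OF lift_cont continuous_on_fst]) (auto intro: continuous_on_id)
  then show ?thesis unfolding e
  proof (rule continuous_on_Pair)
    show "continuous_on UNIV (\<lambda>p::seq\<times>real. if c then 1 - snd p else snd p)"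
      by (cases c) (simp_all add: continuous_on_snd continuous_on_diff continuous_on_const continuous_on_id)
  qed
qed

lemma Pi_LL: "\<xi> \<in> SigmaN N \<Longrightarrow> Pi_map N (LL N f c (\<xi>, y)) = (\<xi>, y)"
proof -
  assume x: "\<xi> \<in> SigmaN N"
  then have "\<xi> 0 \<in> {1..N}" by (auto simp: SigmaN_def)
  then have "lift N f c \<xi> 0 \<le> N \<longleftrightarrow> \<not> c" using lift_state[of \<xi> 0 N f c] PP0 by auto
  then show ?thesis using proj_lift[OF x] by (cases c) (auto simp: Pi_map_def LL_def RR_def)
qed

lemma LL_X:
  assumes pr: "\<forall>i\<in>{1..N}. i \<in> IP N f \<or> i \<in> IR N f" and r: "r \<in> SigmaN N \<times> II"
  shows "LL N f c r \<in> SigmaA N f \<times> II"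
  using r lift_SigmaA[OF _ pr] by (auto simp: LL_def II_def)

lemma proj_SigmaN: "\<omega> \<in> SigmaA N f \<Longrightarrow> proj N \<omega> \<in> SigmaN N"
proof -
  assume "\<omega> \<in> SigmaA N f"
  then have r: "\<omega> n \<in> {1..2*N}" for n by (auto simp: SigmaA_def)
  have "bar N (\<omega> n) \<in> {1..N}" for n using r[of n] unfolding bar_def by auto
  then show ?thesis by (auto simp: SigmaN_def proj_def)
qed

lemma Pi_X: "p \<in> SigmaA N f \<times> II \<Longrightarrow> Pi_map N p \<in> SigmaN N \<times> II"
  using proj_SigmaN by (auto simp: Pi_map_def II_def RR_def)

lemma uniq_pair:
  assumes "p \<in> SigmaA N f \<times> UNIV" "p' \<in> SigmaA N f \<times> UNIV" "Pi_map N p = Pi_map N p'"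
    "fst p 0 \<le> N \<longleftrightarrow> fst p' 0 \<le> N"
  shows "p = p'"
proof -
  obtain \<omega> x \<omega>' x' where p: "p = (\<omega>, x)" "p' = (\<omega>', x')" by fastforce
  have pr: "proj N \<omega> = proj N \<omega>'" using assms(3) unfolding p Pi_map_def by (auto split: if_splits)
  have "\<omega> = \<omega>'" using uniq_seq[of \<omega> N f \<omega>'] assms pr unfolding p by auto
  moreover have "x = x'" using assms(3,4) unfolding p Pi_map_def RR_def by (auto split: if_splits)
  ultimately show ?thesis using p by simp
qed

lemma LL_Pi:
  assumes pr: "\<forall>i\<in>{1..N}. i \<in> IP N f \<or> i \<in> IR N f" and p: "p \<in> SigmaA N f \<times> UNIV"
  shows "p = LL N f (\<not> fst p 0 \<le> N) (Pi_map N p)"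
proof -
  obtain \<omega> x where pe: "p = (\<omega>, x)" by fastforce
  have w: "\<omega> \<in> SigmaA N f" using p pe by auto
  have xi: "proj N \<omega> \<in> SigmaN N" using w by (rule proj_SigmaN)
  define c where "c = (\<not> \<omega> 0 \<le> N)"
  have l: "lift N f c (proj N \<omega>) \<in> SigmaA N f" by (rule lift_SigmaA[OF xi pr])
  have "proj N \<omega> 0 \<in> {1..N}" using xi by (auto simp: SigmaN_def)
  then have s: "lift N f c (proj N \<omega>) 0 \<le> N \<longleftrightarrow> \<omega> 0 \<le> N"
    using lift_state[of "proj N \<omega>" 0 N f c] PP0 c_def by auto
  have "lift N f c (proj N \<omega>) = \<omega>"
    by (rule uniq_seq[OF l w]) (use proj_lift[OF xi] s in auto)
  then show ?thesis unfolding pe c_def by (auto simp: LL_def Pi_map_def RR_def)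
qed

lemma comm:
  assumes w: "\<omega> \<in> SigmaA N f"
  shows "Pi_map N (GG N f (\<omega>, x)) = FF f (Pi_map N (\<omega>, x))"
proof -
  have "amat N f (\<omega> 0) (\<omega> (0 + 1))" using w unfolding SigmaA_def by blast
  then have am: "amat N f (\<omega> 0) (\<omega> 1)" by simp
  have side: "\<omega> 1 \<le> N \<longleftrightarrow> (\<omega> 0 \<le> N \<and> \<omega> 0 \<in> IP N f) \<or> (N < \<omega> 0 \<and> \<omega> 0 - N \<in> IR N f)"
    by (rule amat_side[OF am])
  have or: "\<omega> 0 \<le> N \<Longrightarrow> \<omega> 0 \<in> IP N f \<or> \<omega> 0 \<in> IR N f"
     "\<omega> 0 > N \<Longrightarrow> \<omega> 0 - N \<in> IP N f \<or> \<omega> 0 - N \<in> IR N f"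
    using am unfolding amat_def by (auto dest: IP_sub IR_sub)
  have dj: "\<And>k. k \<in> IP N f \<Longrightarrow> k \<in> IR N f \<Longrightarrow> False" using IP_IR_disj by blast
  have ps: "proj N (shift \<omega>) = shift (proj N \<omega>)" by (simp add: proj_def shift_def)
  have s1: "shift \<omega> 0 = \<omega> 1" by (simp add: shift_def)
  have G: "GG N f (\<omega>, x) = (shift \<omega>, gmap N f (\<omega> 0) x)" by (simp add: GG_def)
  have P1: "Pi_map N (shift \<omega>, y) = (if \<omega> 1 \<le> N then (shift (proj N \<omega>), y) else (shift (proj N \<omega>), 1 - y))" for y
    by (simp add: Pi_map_def ps s1 RR_def)
  have P0: "Pi_map N (\<omega>, x) = (if \<omega> 0 \<le> N then (proj N \<omega>, x) else (proj N \<omega>, 1 - x))"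
    by (simp add: Pi_map_def RR_def)
  have F: "FF f (\<xi>, y) = (shift \<xi>, f (\<xi> 0) y)" for \<xi> y by (simp add: FF_def)
  have b0: "proj N \<omega> 0 = (if \<omega> 0 \<le> N then \<omega> 0 else \<omega> 0 - N)" by (simp add: proj_def bar_def)
  show ?thesis
  proof (cases "\<omega> 0 \<le> N")
    case True
    show ?thesis
    proof (cases "\<omega> 0 \<in> IP N f")
      case True2: True
      then have "\<omega> 1 \<le> N" using side \<open>\<omega> 0 \<le> N\<close> by blast
      then show ?thesis unfolding G P1 P0 using True True2 by (simp add: F b0 gmap_def)
    next
      case False
      then have "\<not> \<omega> 1 \<le> N" using side \<open>\<omega> 0 \<le> N\<close> by auto
      then show ?thesis unfolding G P1 P0 using True False by (simp add: F b0 gmap_def RR_def)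
    qed
  next
    case False
    then have nip: "\<omega> 0 \<notin> IP N f" using IP_sub by fastforce
    show ?thesis
    proof (cases "\<omega> 0 - N \<in> IP N f")
      case True2: True
      then have "\<not> \<omega> 1 \<le> N" using side False dj by auto
      then show ?thesis unfolding G P1 P0 using False True2 by (simp add: F b0 gmap_def RR_def)
    next
      case F2: False
      then have "\<omega> 1 \<le> N" using side False or by auto
      then show ?thesis unfolding G P1 P0 using False F2 by (simp add: F b0 gmap_def RR_def)
    qed
  qed
qed




lemma rel_int_iff: "p \<in> rel_int X S \<longleftrightarrow> (\<exists>U. open U \<and> p \<in> U \<and> p \<in> X \<and> U \<inter> X \<subseteq> S)"
  unfolding rel_int_def interior_of_def openin_open by blast

lemma rel_int_sub: "rel_int X S \<subseteq> S"
  using rel_int_iff by blast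

lemma shift_SigmaA: "\<omega> \<in> SigmaA N f \<Longrightarrow> shift \<omega> \<in> SigmaA N f"
proof -
  assume "\<omega> \<in> SigmaA N f"
  then have h: "\<omega> n \<in> {1..2*N} \<and> amat N f (\<omega> n) (\<omega> (n + 1))" for n by (auto simp: SigmaA_def)
  have "shift \<omega> n \<in> {1..2*N} \<and> amat N f (shift \<omega> n) (shift \<omega> (n + 1))" for n
    using h[of "n+1"] by (simp add: shift_def)
  then show ?thesis by (simp add: SigmaA_def)
qed

lemma shift_SigmaN: "\<xi> \<in> SigmaN N \<Longrightarrow> shift \<xi> \<in> SigmaN N"
  unfolding SigmaN_def shift_def by simp

lemma RR_II: "x \<in> II \<Longrightarrow> RR x \<in> II" by (auto simp: RR_def II_def)

lemma G_X:
  assumes C1: "\<forall>i\<in>{1..N}. C1_diffeo_onto_image (f i)" and p: "p \<in> SigmaA N f \<times> II"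
  shows "GG N f p \<in> SigmaA N f \<times> II"
proof -
  obtain \<omega> x where pe: "p = (\<omega>, x)" by fastforce
  have w: "\<omega> \<in> SigmaA N f" and x: "x \<in> II" using p pe by auto
  have r: "\<omega> 0 \<in> {1..2*N}" using w by (auto simp: SigmaA_def)
  have fi: "i \<in> {1..N} \<Longrightarrow> y \<in> II \<Longrightarrow> f i y \<in> II" for i y
    using C1 unfolding C1_diffeo_onto_image_def by blast
  have "gmap N f (\<omega> 0) x \<in> II"
  proof (cases "\<omega> 0 \<le> N")
    case True
    then have "\<omega> 0 \<in> {1..N}" using r by auto
    then show ?thesis using True fi[OF _ x] RR_II by (auto simp: gmap_def)
  next
    case False
    then have "\<omega> 0 - N \<in> {1..N}" using r by auto
    then show ?thesis using False fi RR_II x by (auto simp: gmap_def)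
  qed
  then show ?thesis using shift_SigmaA[OF w] pe by (simp add: GG_def)
qed

lemma F_X:
  assumes C1: "\<forall>i\<in>{1..N}. C1_diffeo_onto_image (f i)" and p: "q \<in> SigmaN N \<times> II"
  shows "FF f q \<in> SigmaN N \<times> II"
proof -
  obtain \<xi> x where pe: "q = (\<xi>, x)" by fastforce
  have w: "\<xi> \<in> SigmaN N" and x: "x \<in> II" using p pe by auto
  have r: "\<xi> 0 \<in> {1..N}" using w by (auto simp: SigmaN_def)
  have "f (\<xi> 0) x \<in> II" using C1 r x unfolding C1_diffeo_onto_image_def by blast
  then show ?thesis using shift_SigmaN[OF w] pe by (simp add: FF_def)
qed

lemma open_Pi:
  assumes pr: "\<forall>i\<in>{1..N}. i \<in> IP N f \<or> i \<in> IR N f"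
    and S: "S \<subseteq> SigmaA N f \<times> II" and p: "p \<in> rel_int (SigmaA N f \<times> II) S"
  shows "Pi_map N p \<in> rel_int (SigmaN N \<times> II) (Pi_map N ` S)"
proof -
  obtain U where U: "open U" "p \<in> U" "p \<in> SigmaA N f \<times> II" "U \<inter> (SigmaA N f \<times> II) \<subseteq> S"
    using p unfolding rel_int_iff by blast
  define c where "c = (\<not> fst p 0 \<le> N)"
  have pe: "p = LL N f c (Pi_map N p)" unfolding c_def by (rule LL_Pi[OF pr]) (use U in auto)
  define V where "V = LL N f c -` U"
  have oV: "open V" unfolding V_def by (rule open_vimage[OF U(1) LL_cont])
  have iV: "Pi_map N p \<in> V"
  proof -
    have "LL N f c (Pi_map N p) = p" by (rule sym[OF pe])
    then show ?thesis unfolding V_def using U(2) by (simp only: vimage_eq)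
  qed
  have iX: "Pi_map N p \<in> SigmaN N \<times> II" using Pi_X U(3) by blast
  have sV: "V \<inter> (SigmaN N \<times> II) \<subseteq> Pi_map N ` S"
  proof
    fix r assume r: "r \<in> V \<inter> (SigmaN N \<times> II)"
    have rX: "r \<in> SigmaN N \<times> II" using r by (rule IntD2)
    have "LL N f c r \<in> SigmaA N f \<times> II" by (rule LL_X[OF pr rX])
    moreover have "LL N f c r \<in> U" using r unfolding V_def by simp
    ultimately have "LL N f c r \<in> U \<inter> (SigmaA N f \<times> II)" by (rule IntI[rotated])
    then have "LL N f c r \<in> S" using U(4) by (rule subsetD[rotated])
    moreover have "Pi_map N (LL N f c r) = r"
    proof -
      obtain \<xi> y where re: "r = (\<xi>, y)" by fastforce
      then have "\<xi> \<in> SigmaN N" using r by auto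
      then show ?thesis using Pi_LL re by simp
    qed
    ultimately show "r \<in> Pi_map N ` S" by (metis image_eqI)
  qed
  show ?thesis unfolding rel_int_iff by (intro exI[of _ V] conjI oV iV iX sV)
qed

lemma img_Pi:
  assumes "A \<subseteq> SigmaA N f \<times> UNIV"
  shows "FF f ` (Pi_map N ` A) = Pi_map N ` (GG N f ` A)"
proof -
  have eq: "FF f (Pi_map N p) = Pi_map N (GG N f p)" if "p \<in> A" for p
  proof -
    obtain w x where pe: "p = (w, x)" by fastforce
    have "w \<in> SigmaA N f" using assms that pe by auto
    then show ?thesis using comm[of w N f x] pe by simp
  qed
  have "FF f ` (Pi_map N ` A) = (\<lambda>p. FF f (Pi_map N p)) ` A" by (simp add: image_image)
  also have "\<dots> = (\<lambda>p. Pi_map N (GG N f p)) ` A" by (rule image_cong) (simp_all add: eq)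
  also have "\<dots> = Pi_map N ` (GG N f ` A)" by (simp add: image_image)
  finally show ?thesis .
qed

lemma preim_Pi:
  assumes pr: "\<forall>i\<in>{1..N}. i \<in> IP N f \<or> i \<in> IR N f"
    and C1: "\<forall>i\<in>{1..N}. C1_diffeo_onto_image (f i)"
    and A: "A \<subseteq> SigmaA N f \<times> II"
  shows "preim (FF f) (SigmaN N \<times> II) (Pi_map N ` A) = Pi_map N ` preim (GG N f) (SigmaA N f \<times> II) A"
proof
  show "Pi_map N ` preim (GG N f) (SigmaA N f \<times> II) A \<subseteq> preim (FF f) (SigmaN N \<times> II) (Pi_map N ` A)"
  proof
    fix q assume "q \<in> Pi_map N ` preim (GG N f) (SigmaA N f \<times> II) A"
    then obtain p where p: "p \<in> SigmaA N f \<times> II" "GG N f p \<in> A" "q = Pi_map N p"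
      unfolding preim_def by blast
    have "FF f q = Pi_map N (GG N f p)" using comm[of "fst p" N f "snd p"] p by (cases p) auto
    then show "q \<in> preim (FF f) (SigmaN N \<times> II) (Pi_map N ` A)"
      using p Pi_X unfolding preim_def by blast
  qed
next
  show "preim (FF f) (SigmaN N \<times> II) (Pi_map N ` A) \<subseteq> Pi_map N ` preim (GG N f) (SigmaA N f \<times> II) A"
  proof
    fix r assume "r \<in> preim (FF f) (SigmaN N \<times> II) (Pi_map N ` A)"
    then obtain p where r: "r \<in> SigmaN N \<times> II" and p: "p \<in> A" "FF f r = Pi_map N p"
      unfolding preim_def by blast
    obtain \<xi> y where re: "r = (\<xi>, y)" by fastforce
    have xi: "\<xi> \<in> SigmaN N" using r re by auto
    define c where "c = (if fst p 0 \<le> N then PP N f \<xi> 1 else \<not> PP N f \<xi> 1)"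
    have r': "LL N f c r \<in> SigmaA N f \<times> II" using LL_X[OF pr r] .
    have g: "GG N f (LL N f c r) \<in> SigmaA N f \<times> II" using G_X[OF C1 r'] .
    have "Pi_map N (GG N f (LL N f c r)) = FF f (Pi_map N (LL N f c r))"
      using comm[of "fst (LL N f c r)" N f "snd (LL N f c r)"] r' by (cases "LL N f c r") auto
    also have "\<dots> = FF f r" using Pi_LL[OF xi] re by simp
    finally have e: "Pi_map N (GG N f (LL N f c r)) = Pi_map N p" using p by simp
    have "\<xi> 1 \<in> {1..N}" using xi by (auto simp: SigmaN_def)
    then have st: "lift N f c \<xi> 1 \<le> N \<longleftrightarrow> fst p 0 \<le> N"
      using lift_state[of \<xi> 1 N f c] c_def by auto
    have "fst (GG N f (LL N f c r)) 0 = lift N f c \<xi> 1"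
      by (simp add: GG_def LL_def re shift_def)
    then have "GG N f (LL N f c r) = p"
      using uniq_pair[of "GG N f (LL N f c r)" N f p] g p A e st by auto
    then have "LL N f c r \<in> preim (GG N f) (SigmaA N f \<times> II) A" using r' p unfolding preim_def by auto
    moreover have "Pi_map N (LL N f c r) = r" using Pi_LL[OF xi] re by simp
    ultimately show "r \<in> Pi_map N ` preim (GG N f) (SigmaA N f \<times> II) A" by force
  qed
qed

lemma inter_Pi:
  assumes pr: "\<forall>i\<in>{1..N}. i \<in> IP N f \<or> i \<in> IR N f"
    and dec: "\<And>n. A (Suc n) \<subseteq> A n" and sub: "\<And>n. A n \<subseteq> SigmaA N f \<times> UNIV"
  shows "(\<Inter>n. Pi_map N ` A n) = Pi_map N ` (\<Inter>n. A n)"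
proof
  show "Pi_map N ` (\<Inter>n. A n) \<subseteq> (\<Inter>n. Pi_map N ` A n)" by blast
next
  show "(\<Inter>n. Pi_map N ` A n) \<subseteq> Pi_map N ` (\<Inter>n. A n)"
  proof
    fix q assume q: "q \<in> (\<Inter>n. Pi_map N ` A n)"
    have h: "\<exists>c. LL N f c q \<in> A n" for n
    proof -
      obtain p where "p \<in> A n" "q = Pi_map N p" using q by blast
      then have "p = LL N f (\<not> fst p 0 \<le> N) q" using LL_Pi[OF pr, of p] sub[of n] by blast
      then show ?thesis using \<open>p \<in> A n\<close> by (metis (full_types))
    qed
    obtain p0 where p0: "p0 \<in> A 0" "q = Pi_map N p0" using q by blast
    have xi: "fst q \<in> SigmaN N" using p0 sub[of 0] proj_SigmaN
      by (cases p0) (auto simp: Pi_map_def)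
    have Pq: "Pi_map N (LL N f c q) = q" for c using Pi_LL[OF xi] by (cases q) auto
    have anti: "m \<le> k \<Longrightarrow> A k \<subseteq> A m" for m k
      using lift_Suc_antimono_le[of A, OF dec] by blast
    have "\<exists>c. \<forall>n. LL N f c q \<in> A n"
    proof (rule ccontr)
      assume "\<not> ?thesis"
      then obtain m m' where m: "LL N f True q \<notin> A m" "LL N f False q \<notin> A m'" by blast
      obtain c where "LL N f c q \<in> A (max m m')" using h by blast
      then show False using m anti[of m "max m m'"] anti[of m' "max m m'"] by (cases c) auto
    qed
    then obtain c where "\<forall>n. LL N f c q \<in> A n" by blast
    then show "q \<in> Pi_map N ` (\<Inter>n. A n)" using Pq[of c] by force
  qed
qed




lemma strip_sub: "is_strip (SigmaA N f) S \<Longrightarrow> S \<subseteq> SigmaA N f \<times> II"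
  unfolding is_strip_def strip_def II_def by fastforce

lemma bistrip:
  assumes pr: "\<forall>i\<in>{1..N}. i \<in> IP N f \<or> i \<in> IR N f"
    and st: "is_strip (SigmaA N f) S"
  shows "is_bistrip (SigmaN N) (Pi_map N ` S)"
proof -
  obtain \<phi> \<psi> where b: "\<forall>\<omega>\<in>SigmaA N f. 0 \<le> \<phi> \<omega> \<and> \<phi> \<omega> < \<psi> \<omega> \<and> \<psi> \<omega> \<le> 1"
    and S: "S = strip (SigmaA N f) \<phi> \<psi>"
    using st unfolding is_strip_def by blast
  define S1 where "S1 = strip (SigmaN N) (\<lambda>\<xi>. \<phi> (lift N f False \<xi>)) (\<lambda>\<xi>. \<psi> (lift N f False \<xi>))"
  define S2 where "S2 = strip (SigmaN N) (\<lambda>\<xi>. 1 - \<psi> (lift N f True \<xi>)) (\<lambda>\<xi>. 1 - \<phi> (lift N f True \<xi>))"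
  have l: "\<xi> \<in> SigmaN N \<Longrightarrow> lift N f c \<xi> \<in> SigmaA N f" for \<xi> c by (rule lift_SigmaA[OF _ pr])
  have i1: "is_strip (SigmaN N) S1" unfolding is_strip_def S1_def
    by (intro exI[of _ "\<lambda>\<xi>. \<phi> (lift N f False \<xi>)"] exI[of _ "\<lambda>\<xi>. \<psi> (lift N f False \<xi>)"] conjI[OF _ refl] ballI) (use b l in auto)
  have i2: "is_strip (SigmaN N) S2" unfolding is_strip_def S2_def
    by (intro exI[of _ "\<lambda>\<xi>. 1 - \<psi> (lift N f True \<xi>)"] exI[of _ "\<lambda>\<xi>. 1 - \<phi> (lift N f True \<xi>)"] conjI[OF _ refl] ballI) (use b l in fastforce)
  have "Pi_map N ` S = S1 \<union> S2"
  proof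
    show "Pi_map N ` S \<subseteq> S1 \<union> S2"
    proof
      fix q assume "q \<in> Pi_map N ` S"
      then obtain p where p: "p \<in> S" "q = Pi_map N p" by blast
      obtain \<omega> x where pe: "p = (\<omega>, x)" by fastforce
      have w: "\<omega> \<in> SigmaA N f" and bx: "\<phi> \<omega> \<le> x" "x \<le> \<psi> \<omega>" using p pe S by (auto simp: strip_def)
      obtain \<xi> y where qe: "q = (\<xi>, y)" by fastforce
      have xi: "\<xi> = proj N \<omega>" using p pe qe by (auto simp: Pi_map_def split: if_splits)
      then have xiS: "\<xi> \<in> SigmaN N" using proj_SigmaN[OF w] by simp
      have "p = LL N f (\<not> fst p 0 \<le> N) (Pi_map N p)" using LL_Pi[OF pr, of p] w pe by auto
      then have e: "(\<omega>, x) = LL N f (\<not> \<omega> 0 \<le> N) (\<xi>, y)" using pe p(2) qe by simp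
      show "q \<in> S1 \<union> S2"
      proof (cases "\<omega> 0 \<le> N")
        case True
        then have "\<omega> = lift N f False \<xi>" "x = y" using e by (auto simp: LL_def)
        then show ?thesis using xiS bx qe by (auto simp: S1_def strip_def)
      next
        case False
        then have "\<omega> = lift N f True \<xi>" "x = 1 - y" using e by (auto simp: LL_def)
        then show ?thesis using xiS bx qe by (auto simp: S2_def strip_def)
      qed
    qed
  next
    show "S1 \<union> S2 \<subseteq> Pi_map N ` S"
    proof
      fix q assume q: "q \<in> S1 \<union> S2"
      obtain \<xi> y where qe: "q = (\<xi>, y)" by fastforce
      have xiS: "\<xi> \<in> SigmaN N" using q qe by (auto simp: S1_def S2_def strip_def)
      show "q \<in> Pi_map N ` S"
      proof (cases "q \<in> S1")
        case True
        have "LL N f False (\<xi>, y) \<in> S" using True qe l[OF xiS] by (auto simp: S1_def S S2_def strip_def LL_def)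
        moreover have "Pi_map N (LL N f False (\<xi>, y)) = q" using Pi_LL[OF xiS] qe by simp
        ultimately show ?thesis by (metis image_eqI)
      next
        case False
        then have "q \<in> S2" using q by blast
        then have "LL N f True (\<xi>, y) \<in> S" using qe l[OF xiS] by (auto simp: S S2_def strip_def LL_def)
        moreover have "Pi_map N (LL N f True (\<xi>, y)) = q" using Pi_LL[OF xiS] qe by simp
        ultimately show ?thesis by (metis image_eqI)
      qed
    qed
  qed
  then show ?thesis unfolding is_bistrip_def using i1 i2 by blast
qed




theorem lemma3p10:
  fixes N :: nat and f :: "nat \<Rightarrow> real \<Rightarrow> real" and S :: "(seq \<times> real) set"
  assumes "N \<ge> 1"
    and "\<forall>i\<in>{1..N}. C1_diffeo_onto_image (f i)"
    and "is_strip (SigmaA N f) S"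
  shows "(attracting (GG N f) (SigmaA N f \<times> II) S \<longrightarrow>
            is_bistrip (SigmaN N) (Pi_map N ` S)
          \<and> attracting (FF f) (SigmaN N \<times> II) (Pi_map N ` S)
          \<and> max_attractor (FF f) (Pi_map N ` S) = Pi_map N ` max_attractor (GG N f) S)
       \<and> (repelling (GG N f) (SigmaA N f \<times> II) S \<longrightarrow>
            is_bistrip (SigmaN N) (Pi_map N ` S)
          \<and> repelling (FF f) (SigmaN N \<times> II) (Pi_map N ` S)
          \<and> max_repeller (FF f) (SigmaN N \<times> II) (Pi_map N ` S)
              = Pi_map N ` max_repeller (GG N f) (SigmaA N f \<times> II) S)"
proof -
  note C1 = assms(2)
  have pr: "\<forall>i\<in>{1..N}. i \<in> IP N f \<or> i \<in> IR N f" using IP_or_IR[OF C1] by blast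
  have SX: "S \<subseteq> SigmaA N f \<times> II" by (rule strip_sub[OF assms(3)])
  have bi: "is_bistrip (SigmaN N) (Pi_map N ` S)" by (rule bistrip[OF pr assms(3)])
  have XU: "SigmaA N f \<times> II \<subseteq> SigmaA N f \<times> UNIV" by blast
  have ri: "Pi_map N ` rel_int (SigmaA N f \<times> II) S \<subseteq> rel_int (SigmaN N \<times> II) (Pi_map N ` S)"
    using open_Pi[OF pr SX] by (simp add: image_subset_iff)
  have part1: "attracting (FF f) (SigmaN N \<times> II) (Pi_map N ` S)
          \<and> max_attractor (FF f) (Pi_map N ` S) = Pi_map N ` max_attractor (GG N f) S"
    if att: "attracting (GG N f) (SigmaA N f \<times> II) S"
  proof -
    have GS: "GG N f ` S \<subseteq> rel_int (SigmaA N f \<times> II) S" using att unfolding attracting_def .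
    define A where "A n = ((\<lambda>A. GG N f ` A) ^^ n) S" for n
    have AX: "A n \<subseteq> SigmaA N f \<times> II" for n
    proof (induction n)
      case 0 then show ?case using SX by (simp add: A_def)
    next
      case (Suc n)
      have "A (Suc n) = GG N f ` A n" by (simp add: A_def)
      moreover have "GG N f ` A n \<subseteq> SigmaA N f \<times> II"
      proof (rule image_subsetI)
        fix p assume "p \<in> A n"
        then have "p \<in> SigmaA N f \<times> II" using Suc.IH by (rule subsetD[rotated])
        then show "GG N f p \<in> SigmaA N f \<times> II" by (rule G_X[OF C1])
      qed
      ultimately show ?case by simp
    qed
    have AXU: "A n \<subseteq> SigmaA N f \<times> UNIV" for n using AX[of n] by blast
    have AS: "A (Suc n) = GG N f ` A n" for n by (simp add: A_def)
    have dec: "A (Suc n) \<subseteq> A n" for n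
    proof (induction n)
      case 0 then show ?case using GS rel_int_sub by (simp add: A_def) blast
    next
      case (Suc n) then show ?case unfolding AS[of "Suc n"] AS[of n] by (rule image_mono)
    qed
    have FA: "((\<lambda>A. FF f ` A) ^^ n) (Pi_map N ` S) = Pi_map N ` A n" for n
    proof (induction n)
      case 0 then show ?case by (simp add: A_def)
    next
      case (Suc n)
      have "((\<lambda>A. FF f ` A) ^^ Suc n) (Pi_map N ` S) = FF f ` (Pi_map N ` A n)" using Suc by simp
      also have "\<dots> = Pi_map N ` A (Suc n)" unfolding AS by (rule img_Pi[OF AXU])
      finally show ?case .
    qed
    have "FF f ` (Pi_map N ` S) = Pi_map N ` (GG N f ` S)" by (rule img_Pi) (use SX in blast)
    also have "\<dots> \<subseteq> Pi_map N ` rel_int (SigmaA N f \<times> II) S" using GS by (rule image_mono)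
    also have "\<dots> \<subseteq> rel_int (SigmaN N \<times> II) (Pi_map N ` S)" by (rule ri)
    finally have a: "attracting (FF f) (SigmaN N \<times> II) (Pi_map N ` S)" unfolding attracting_def .
    have "max_attractor (FF f) (Pi_map N ` S) = (\<Inter>n. Pi_map N ` A n)"
      unfolding max_attractor_def FA ..
    also have "\<dots> = Pi_map N ` (\<Inter>n. A n)" by (rule inter_Pi[OF pr, of A, OF dec AXU])
    also have "\<dots> = Pi_map N ` max_attractor (GG N f) S" unfolding max_attractor_def A_def ..
    finally show ?thesis using a by blast
  qed
  have part2: "repelling (FF f) (SigmaN N \<times> II) (Pi_map N ` S)
          \<and> max_repeller (FF f) (SigmaN N \<times> II) (Pi_map N ` S)
              = Pi_map N ` max_repeller (GG N f) (SigmaA N f \<times> II) S"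
    if rep: "repelling (GG N f) (SigmaA N f \<times> II) S"
  proof -
    have r1: "S \<subseteq> GG N f ` (SigmaA N f \<times> II)" and
      r2: "preim (GG N f) (SigmaA N f \<times> II) S \<subseteq> rel_int (SigmaA N f \<times> II) S"
      using rep unfolding repelling_def by blast+
    define A where "A n = ((\<lambda>A. preim (GG N f) (SigmaA N f \<times> II) A) ^^ n) S" for n
    have AX: "A n \<subseteq> SigmaA N f \<times> II" for n
    proof (cases n)
      case 0 then show ?thesis using SX by (simp add: A_def)
    next
      case (Suc m)
      have "A n = preim (GG N f) (SigmaA N f \<times> II) (A m)" unfolding Suc by (simp add: A_def)
      then show ?thesis unfolding preim_def by blast
    qed
    have AXU: "A n \<subseteq> SigmaA N f \<times> UNIV" for n using AX[of n] by blast
    have AS: "A (Suc n) = preim (GG N f) (SigmaA N f \<times> II) (A n)" for n by (simp add: A_def)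
    have dec: "A (Suc n) \<subseteq> A n" for n
    proof (induction n)
      case 0
      have "A (Suc 0) = preim (GG N f) (SigmaA N f \<times> II) S" "A 0 = S" by (simp_all add: A_def)
      then show ?case using r2 rel_int_sub[of "SigmaA N f \<times> II" S] by simp
    next
      case (Suc n)
      have "preim (GG N f) (SigmaA N f \<times> II) (A (Suc n)) \<subseteq> preim (GG N f) (SigmaA N f \<times> II) (A n)"
        using Suc.IH unfolding preim_def by blast
      then show ?case by (simp only: AS)
    qed
    have FA: "((\<lambda>A. preim (FF f) (SigmaN N \<times> II) A) ^^ n) (Pi_map N ` S) = Pi_map N ` A n" for n
    proof (induction n)
      case 0 then show ?case by (simp add: A_def)
    next
      case (Suc n)
      have "((\<lambda>A. preim (FF f) (SigmaN N \<times> II) A) ^^ Suc n) (Pi_map N ` S)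
          = preim (FF f) (SigmaN N \<times> II) (Pi_map N ` A n)" using Suc by simp
      also have "\<dots> = Pi_map N ` A (Suc n)" unfolding AS by (rule preim_Pi[OF pr C1 AX])
      finally show ?case .
    qed
    have "preim (FF f) (SigmaN N \<times> II) (Pi_map N ` S) = Pi_map N ` preim (GG N f) (SigmaA N f \<times> II) S"
      by (rule preim_Pi[OF pr C1 SX])
    also have "\<dots> \<subseteq> Pi_map N ` rel_int (SigmaA N f \<times> II) S" using r2 by (rule image_mono)
    also have "\<dots> \<subseteq> rel_int (SigmaN N \<times> II) (Pi_map N ` S)" by (rule ri)
    finally have a2: "preim (FF f) (SigmaN N \<times> II) (Pi_map N ` S) \<subseteq> rel_int (SigmaN N \<times> II) (Pi_map N ` S)" .
    have a1: "Pi_map N ` S \<subseteq> FF f ` (SigmaN N \<times> II)"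
    proof
      fix q assume "q \<in> Pi_map N ` S"
      then obtain p where p: "p \<in> S" "q = Pi_map N p" by blast
      then obtain p' where p': "p' \<in> SigmaA N f \<times> II" "p = GG N f p'" using r1 by blast
      obtain w x where pe: "p' = (w, x)" by fastforce
      have "w \<in> SigmaA N f" using p'(1) pe by simp
      then have "Pi_map N (GG N f p') = FF f (Pi_map N p')" using comm[of w N f x] pe by simp
      then have "q = FF f (Pi_map N p')" using p(2) p'(2) by simp
      moreover have "Pi_map N p' \<in> SigmaN N \<times> II" using Pi_X p'(1) by blast
      ultimately show "q \<in> FF f ` (SigmaN N \<times> II)" by (rule image_eqI)
    qed
    have a: "repelling (FF f) (SigmaN N \<times> II) (Pi_map N ` S)" unfolding repelling_def using a1 a2 by blast
    have "max_repeller (FF f) (SigmaN N \<times> II) (Pi_map N ` S) = (\<Inter>n. Pi_map N ` A n)"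
      unfolding max_repeller_def FA ..
    also have "\<dots> = Pi_map N ` (\<Inter>n. A n)" by (rule inter_Pi[OF pr, of A, OF dec AXU])
    also have "\<dots> = Pi_map N ` max_repeller (GG N f) (SigmaA N f \<times> II) S" unfolding max_repeller_def A_def ..
    finally show ?thesis using a by blast
  qed
  show ?thesis using bi part1 part2 by blast
qed


end
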